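(* Let $\mathbf{X}$ be a Euclidean space, let $M, Q \subset \mathbf{X}$ be nonempty closed sets, and let $\bar x \in M \cap Q$. Suppose that $Q$ intersects $M$ separably at $\bar x$, and that $Q$ is prox-regular at $\bar x$. Let $\Phi \colon \mathbf{X} \to \mathbf{X}$ be an inexact projection onto $M$ around $\bar x$. Then for every starting point $z^0 \in Q$ sufficiently close to $\bar x$, the inexact alternating projection iteration \[ z^{k+1} = P_Q\big(\Phi(z^k)\big), \qquad k = 0,1,2,\ldots \] converges linearly to a point in the intersection $M \cap Q$.
   Context: For a nonempty closed set $S \subset \mathbf{X}$, $d_S(z) = \min\{|x-z| : x \in S\}$ is the distance function and $P_S(z)$ is the (possibly multivalued) set of nearest points of $S$ to $z$. The set $Q$ is prox-regular at $\bar x \in Q$ if $P_Q$ is single-valued on a neighborhood of $\bar x$ (so the iteration is well defined near $\bar x$). The set $Q$ intersects $M$ separably at $\bar x \in M \cap Q$ if there exists an angle $\alpha>0$ such that, for any point $z \in Q\setminus M$ sufficiently close to $\bar x$ and any points $x \in P_M(z)\setminus Q$ and $z' \in P_Q(x)$, the angle between the vectors $z-x$ and $z'-x$ is at least $\alpha$. A map $\Phi\colon \mathbf{X}\to\mathbf{X}$ is an inexact projection onto $M$ around $\bar x \in M$ if $d_{P_M(z)}(\Phi(z)) = o(d_M(z))$ as $z \to \bar x$. A sequence $(z^k)$ converges linearly to $\hat z$ if there exist constants $c \in (0,1)$ and $\rho>0$ with $|z^k - \hat z| < \rho c^k$ for all $k$. *)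

theory Defs
  imports "HOL-Analysis.Analysis" "HOL-Library.Landau_Symbols"
begin

definition proj_set :: "'a::euclidean_space set \<Rightarrow> 'a \<Rightarrow> 'a set" where
  "proj_set S z = {x \<in> S. \<forall>y\<in>S. norm (x - z) \<le> norm (y - z)}"

definition vangle :: "'a::euclidean_space \<Rightarrow> 'a \<Rightarrow> real" where
  "vangle u v = arccos ((u \<bullet> v) / (norm u * norm v))"

definition prox_regular_at :: "'a::euclidean_space set \<Rightarrow> 'a \<Rightarrow> bool" where
  "prox_regular_at Q xbar \<longleftrightarrow> xbar \<in> Q \<and>
     (\<exists>\<epsilon>>0. \<forall>z\<in>ball xbar \<epsilon>. \<exists>!x. x \<in> proj_set Q z)"

definition intersects_separably :: "'a::euclidean_space set \<Rightarrow> 'a set \<Rightarrow> 'a \<Rightarrow> bool" where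
  "intersects_separably Q M xbar \<longleftrightarrow> xbar \<in> M \<inter> Q \<and>
     (\<exists>\<alpha>>0. \<exists>\<delta>>0. \<forall>z \<in> Q - M. norm (z - xbar) < \<delta> \<longrightarrow>
        (\<forall>x \<in> proj_set M z - Q. \<forall>z' \<in> proj_set Q x. vangle (z - x) (z' - x) \<ge> \<alpha>))"

definition inexact_projection :: "('a::euclidean_space \<Rightarrow> 'a) \<Rightarrow> 'a set \<Rightarrow> 'a \<Rightarrow> bool" where
  "inexact_projection \<Phi> M xbar \<longleftrightarrow> xbar \<in> M \<and>
     (\<lambda>z. infdist (\<Phi> z) (proj_set M z)) \<in> o[nhds xbar](\<lambda>z. infdist z M)"

definition converges_linearly :: "(nat \<Rightarrow> 'a::real_normed_vector) \<Rightarrow> 'a \<Rightarrow> bool" where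
  "converges_linearly z zhat \<longleftrightarrow>
     (\<exists>c \<rho>. 0 < c \<and> c < 1 \<and> \<rho> > 0 \<and> (\<forall>k. norm (z k - zhat) < \<rho> * c ^ k))"

end

theory Submission
  imports Defs
begin

lemma proj_set_nonempty:
  fixes S :: "'a::euclidean_space set"
  assumes "closed S" "S \<noteq> {}" shows "\<exists>x. x \<in> proj_set S z"
proof -
  obtain x where "x \<in> S" "\<And>y. y \<in> S \<Longrightarrow> dist z x \<le> dist z y"
    using distance_attains_inf[OF assms] by blast
  then show ?thesis unfolding proj_set_def by (auto simp: dist_norm norm_minus_commute)
qed

lemma proj_set_dist:
  assumes "x \<in> proj_set S z" shows "norm (x - z) = infdist z S"
proof -
  have xS: "x \<in> S" and le: "\<And>y. y \<in> S \<Longrightarrow> norm (x - z) \<le> norm (y - z)"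
    using assms unfolding proj_set_def by auto
  have "infdist z S \<le> norm (x - z)" using infdist_le[OF xS, of z] by (simp add: dist_norm norm_minus_commute)
  moreover have "norm (x - z) \<le> infdist z S"
    unfolding infdist_notempty[of S z, OF _] using xS
    by (subst infdist_notempty) (auto intro!: cINF_greatest simp: dist_norm norm_minus_commute le)
  ultimately show ?thesis by simp
qed

lemma proj_setI:
  assumes "x \<in> S" "norm (x - z) \<le> infdist z S" shows "x \<in> proj_set S z"
  unfolding proj_set_def using assms infdist_le[of _ S z]
  by (auto simp: dist_norm norm_minus_commute intro: order_trans)

lemma proj_set_iff:
  "x \<in> proj_set S z \<longleftrightarrow> x \<in> S \<and> norm (x - z) \<le> infdist z S"
proof
  assume h: "x \<in> proj_set S z"
  from proj_set_dist[OF h] have "norm (x - z) = infdist z S" .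
  moreover from h have "x \<in> S" by (simp add: proj_set_def)
  ultimately show "x \<in> S \<and> norm (x - z) \<le> infdist z S" by simp
next
  assume "x \<in> S \<and> norm (x - z) \<le> infdist z S"
  then show "x \<in> proj_set S z" using proj_setI by blast
qed

lemma proj_set_closed:
  assumes "closed S" shows "closed (proj_set S z)"
proof -
  have "proj_set S z = S \<inter> {x. norm (x - z) \<le> infdist z S}"
    using proj_set_iff by blast
  moreover have "closed {x. norm (x - z) \<le> infdist z S}"
    by (intro closed_Collect_le continuous_intros)
  ultimately show ?thesis using assms by auto
qed

lemma proj_segment:
  assumes "q \<in> proj_set S w" "0 \<le> s" "s \<le> 1"
  shows "q \<in> proj_set S (q + s *\<^sub>R (w - q))"
proof -
  have qS: "q \<in> S" and le: "\<And>y. y \<in> S \<Longrightarrow> norm (q - w) \<le> norm (y - w)"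
    using assms unfolding proj_set_def by auto
  { fix p assume pS: "p \<in> S"
    let ?y = "q + s *\<^sub>R (w - q)"
    have e1: "norm (q - ?y) = s * norm (w - q)" using assms(2) by (simp add: norm_minus_commute)
    have e2: "w - ?y = (1 - s) *\<^sub>R (w - q)" by (simp add: algebra_simps)
    have e3: "norm (w - ?y) = (1 - s) * norm (w - q)" using assms(3) by (simp add: e2)
    have "norm (p - w) \<le> norm (p - ?y) + norm (w - ?y)"
      using norm_triangle_ineq4[of "p - ?y" "w - ?y"] by simp
    then have "norm (q - w) \<le> norm (p - ?y) + norm (w - ?y)" using le[OF pS] by simp
    then have "norm (q - ?y) \<le> norm (p - ?y)" using e1 e3 by (simp add: norm_minus_commute algebra_simps)
  }
  then show ?thesis using qS unfolding proj_set_def by auto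
qed

lemma proj_the:
  assumes U: "\<forall>w\<in>ball xb e. \<exists>!x. x \<in> proj_set Q w" and w: "w \<in> ball xb e"
  shows "(THE x. x \<in> proj_set Q w) \<in> proj_set Q w"
    and "q \<in> proj_set Q w \<Longrightarrow> q = (THE x. x \<in> proj_set Q w)"
proof -
  have ex: "\<exists>!x. x \<in> proj_set Q w" using U w by blast
  show "(THE x. x \<in> proj_set Q w) \<in> proj_set Q w" using theI'[OF ex] .
  show "q \<in> proj_set Q w \<Longrightarrow> q = (THE x. x \<in> proj_set Q w)"
    using the1_equality[OF ex] by simp
qed

lemma proj_cont:
  fixes Q :: "'a::euclidean_space set"
  assumes Q: "closed Q" and xb: "xb \<in> Q" and e: "e > 0"
    and U: "\<forall>w\<in>ball xb e. \<exists>!x. x \<in> proj_set Q w"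
  shows "continuous_on (cball xb (e/2)) (\<lambda>w. THE x. x \<in> proj_set Q w)"
proof (rule continuous_from_closed_graph[where T = "cball xb e"])
  let ?p = "\<lambda>w. THE x. x \<in> proj_set Q w"
  have sub: "cball xb (e/2) \<subseteq> ball xb e" using e by auto
  have pp: "?p w \<in> proj_set Q w" if "w \<in> cball xb (e/2)" for w
    using proj_the(1)[OF U] sub that by blast
  show "compact (cball xb e)" by simp
  show "?p \<in> cball xb (e/2) \<rightarrow> cball xb e"
  proof
    fix w assume w: "w \<in> cball xb (e/2)"
    have "norm (?p w - w) = infdist w Q" by (rule proj_set_dist[OF pp[OF w]])
    also have "\<dots> \<le> dist w xb" by (rule infdist_le[OF xb])
    finally have h: "norm (?p w - w) \<le> dist w xb" .
    have "dist xb (?p w) \<le> dist xb w + norm (?p w - w)"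
      using dist_triangle[of xb "?p w" w] by (simp add: dist_norm norm_minus_commute)
    then show "?p w \<in> cball xb e" using w h by (auto simp: dist_commute)
  qed
  show "closed ((\<lambda>x. (x, ?p x)) ` cball xb (e/2))"
    unfolding closed_sequential_limits
  proof (intro allI impI, elim conjE)
    fix s l assume s: "\<forall>n. s n \<in> (\<lambda>x. (x, ?p x)) ` cball xb (e/2)" and l: "s \<longlonglongrightarrow> l"
    have "\<forall>n. \<exists>x. x \<in> cball xb (e/2) \<and> s n = (x, ?p x)"
    proof
      fix n show "\<exists>x. x \<in> cball xb (e/2) \<and> s n = (x, ?p x)" using s[rule_format, of n] by blast
    qed
    from choice[OF this] obtain w where w: "\<And>n. w n \<in> cball xb (e/2)" "\<And>n. s n = (w n, ?p (w n))"
      by blast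
    define a where "a = fst l"
    define b where "b = snd l"
    have wa: "w \<longlonglongrightarrow> a" using tendsto_fst[OF l] w(2) unfolding a_def by simp
    have pb: "(\<lambda>n. ?p (w n)) \<longlonglongrightarrow> b" using tendsto_snd[OF l] w(2) unfolding b_def by simp
    have a: "a \<in> cball xb (e/2)" using closed_sequentially[OF closed_cball _ wa] w(1) by blast
    have pQ: "?p (w n) \<in> Q" for n using pp[OF w(1)[of n]] by (simp add: proj_set_def)
    have b: "b \<in> Q" using closed_sequentially[OF Q _ pb] pQ by blast
    have eqn: "norm (?p (w n) - w n) = infdist (w n) Q" for n by (rule proj_set_dist[OF pp[OF w(1)[of n]]])
    have l1: "(\<lambda>n. norm (?p (w n) - w n)) \<longlonglongrightarrow> norm (b - a)"
      by (intro tendsto_intros pb wa)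
    have l2: "(\<lambda>n. norm (?p (w n) - w n)) \<longlonglongrightarrow> infdist a Q"
      unfolding eqn by (intro tendsto_infdist wa)
    have "norm (b - a) = infdist a Q" using LIMSEQ_unique[OF l1 l2] .
    then have "b \<in> proj_set Q a" using b by (simp add: proj_set_iff)
    then have "b = ?p a" using proj_the(2)[OF U] a sub by blast
    then have "l = (a, ?p a)" unfolding a_def b_def by (metis prod.collapse)
    then show "l \<in> (\<lambda>x. (x, ?p x)) ` cball xb (e/2)" using a by blast
  qed
qed


lemma proj_ext:
  fixes Q :: "'a::euclidean_space set"
  assumes Q: "closed Q" and xb: "xb \<in> Q" and e: "e > 0"
    and U: "\<forall>w\<in>ball xb e. \<exists>!x. x \<in> proj_set Q w"
    and zq: "zq \<in> Q" "norm (zq - xb) < e/8" and u: "norm u = 1"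
    and t0: "t0 > 0" "zq \<in> proj_set Q (zq + t0 *\<^sub>R u)"
  shows "zq \<in> proj_set Q (zq + (e/8) *\<^sub>R u)"
proof -
  define r where "r = e/8"
  have r: "r > 0" using e by (simp add: r_def)
  let ?p = "\<lambda>w. THE x. x \<in> proj_set Q w"
  define S where "S = {t. t \<in> {0..r} \<and> zq \<in> proj_set Q (zq + t *\<^sub>R u)}"
  have seg: "t \<in> S" if "0 \<le> t" "t \<le> t0" "t \<le> r" for t
  proof -
    have "zq \<in> proj_set Q (zq + (t/t0) *\<^sub>R ((zq + t0 *\<^sub>R u) - zq))"
      by (rule proj_segment[OF t0(2)]) (use that t0 in auto)
    moreover have "zq + (t/t0) *\<^sub>R ((zq + t0 *\<^sub>R u) - zq) = zq + t *\<^sub>R u" using t0 by simp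
    ultimately show ?thesis using that unfolding S_def by auto
  qed
  have Sne: "min t0 r \<in> S" using seg t0 r by auto
  have Ssub: "S \<subseteq> {0..r}" unfolding S_def by auto
  have bdd: "bdd_above S" using Ssub by (auto intro: bdd_above_mono)
  have Seq: "S = {0..r} \<inter> (\<Inter>y\<in>Q. {t. norm (zq - (zq + t *\<^sub>R u)) \<le> norm (y - (zq + t *\<^sub>R u))})"
    unfolding S_def proj_set_def using zq(1) by auto
  have closedS: "closed S" unfolding Seq
    by (intro closed_Int closed_INT ballI closed_Collect_le continuous_intros)
  define T where "T = Sup S"
  have TS: "T \<in> S" unfolding T_def using closed_contains_Sup[OF _ bdd closedS] Sne by blast
  have Tpos: "T > 0" using cSup_upper[OF Sne bdd] t0 r unfolding T_def by auto
  have Tr: "T \<le> r" using TS Ssub by auto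
  have "T = r"
  proof (rule ccontr)
    assume "T \<noteq> r" then have Tr': "T < r" using Tr by simp
    define y where "y = zq + T *\<^sub>R u"
    have yproj: "zq \<in> proj_set Q y" using TS unfolding S_def y_def by auto
    have dy: "infdist y Q = T" using proj_set_dist[OF yproj] Tpos u by (simp add: y_def)
    have ydist: "norm (y - xb) < 2 * r"
    proof -
      have "norm (y - xb) \<le> norm (zq - xb) + norm (T *\<^sub>R u)"
        unfolding y_def using norm_triangle_ineq[of "zq - xb" "T *\<^sub>R u"] by (simp add: algebra_simps)
      then show ?thesis using zq(2) Tr Tpos u unfolding r_def by simp
    qed
    define \<delta> where "\<delta> = min (T/3) (r - T)"
    have \<delta>: "\<delta> > 0" "\<delta> \<le> T/3" "\<delta> \<le> r - T" using Tpos Tr' unfolding \<delta>_def by (auto simp: min_def)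
    define C where "C = cball y \<delta>"
    have Csub: "C \<subseteq> cball xb (e/2)"
    proof
      fix w assume "w \<in> C"
      then have "norm (w - y) \<le> \<delta>" by (simp add: C_def dist_norm norm_minus_commute)
      moreover have "norm (w - xb) \<le> norm (w - y) + norm (y - xb)"
        using norm_triangle_ineq[of "w - y" "y - xb"] by simp
      ultimately show "w \<in> cball xb (e/2)" using ydist \<delta> Tr unfolding r_def
        by (simp add: dist_norm norm_minus_commute)
    qed
    have Cball: "C \<subseteq> ball xb e" using Csub e by auto
    have pp: "?p w \<in> proj_set Q w" if "w \<in> C" for w using proj_the(1)[OF U] Cball that by blast
    have dC: "infdist w Q \<ge> 2*T/3" if "w \<in> C" for w
    proof -
      have "infdist y Q \<le> infdist w Q + dist y w" by (rule infdist_triangle)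
      moreover have "dist y w \<le> \<delta>" using that by (simp add: C_def)
      ultimately show ?thesis using dy \<delta> by simp
    qed
    have npos: "norm (w - ?p w) > 0" if "w \<in> C" for w
      using proj_set_dist[OF pp[OF that]] dC[OF that] Tpos by (simp add: norm_minus_commute)
    define f where "f = (\<lambda>w. y + \<delta> *\<^sub>R ((1 / norm (w - ?p w)) *\<^sub>R (w - ?p w)))"
    have contp: "continuous_on C ?p"
      using continuous_on_subset[OF proj_cont[OF Q xb e U] Csub] .
    have contf: "continuous_on C f" unfolding f_def
      by (intro continuous_intros contp) (use npos in auto)
    have fC: "f ` C \<subseteq> C"
    proof
      fix v assume "v \<in> f ` C"
      then obtain w where w: "w \<in> C" "v = f w" by blast
      have "norm (v - y) = \<delta>" using w npos[OF w(1)] \<delta> by (simp add: f_def)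
      then show "v \<in> C" by (simp add: C_def dist_norm norm_minus_commute)
    qed
    obtain w where w: "w \<in> C" "f w = w"
      using brouwer[of C f] contf fC \<delta> unfolding C_def by auto
    define q where "q = ?p w"
    define lam where "lam = norm (w - q)"
    have lam: "lam = infdist w Q" using proj_set_dist[OF pp[OF w(1)]] by (simp add: lam_def q_def norm_minus_commute)
    have lamd: "lam > \<delta>" using dC[OF w(1)] lam \<delta> Tpos by simp
    define ee where "ee = (1 / lam) *\<^sub>R (w - q)"
    have wq: "w - q = lam *\<^sub>R ee" using lamd \<delta> by (simp add: ee_def)
    have nee: "norm ee = 1" using lamd \<delta> by (auto simp: ee_def lam_def)
    have wy: "w = y + \<delta> *\<^sub>R ee" using w(2) by (simp add: f_def ee_def lam_def q_def)
    have yeq: "q + (1 - \<delta>/lam) *\<^sub>R (w - q) = y"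
    proof -
      have "q + (1 - \<delta>/lam) *\<^sub>R (w - q) = w - (\<delta>/lam) *\<^sub>R (w - q)" by (simp add: algebra_simps)
      also have "\<dots> = w - \<delta> *\<^sub>R ee" using lamd \<delta> by (simp add: wq)
      finally show ?thesis using wy by simp
    qed
    have qy: "q \<in> proj_set Q y"
      using proj_segment[OF pp[OF w(1)], of "1 - \<delta>/lam"] lamd \<delta> yeq unfolding q_def[symmetric]
      by auto
    have yball: "y \<in> ball xb e" using Cball \<delta> centre_in_cball[of y \<delta>] unfolding C_def by (meson less_imp_le subsetD)
    have qz: "q = zq" using proj_the(2)[OF U yball qy] proj_the(2)[OF U yball yproj] by simp
    have "y - zq = (lam - \<delta>) *\<^sub>R ee" using wq wy qz by (simp add: algebra_simps)
    moreover have "y - zq = T *\<^sub>R u" by (simp add: y_def)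
    ultimately have eq1: "(lam - \<delta>) *\<^sub>R ee = T *\<^sub>R u" by simp
    then have "norm ((lam - \<delta>) *\<^sub>R ee) = norm (T *\<^sub>R u)" by simp
    then have "lam - \<delta> = T" using nee u lamd Tpos by simp
    with eq1 have "ee = u" using Tpos by simp
    then have "w = zq + (T + \<delta>) *\<^sub>R u" using wy by (simp add: y_def algebra_simps)
    then have "T + \<delta> \<in> S" using pp[OF w(1)] qz \<delta> Tpos unfolding S_def q_def by auto
    then have "T + \<delta> \<le> T" using cSup_upper[OF _ bdd] unfolding T_def by blast
    then show False using \<delta> by simp
  qed
  then show ?thesis using TS unfolding S_def r_def by auto
qed


lemma proj_hypo:
  fixes Q :: "'a::euclidean_space set"
  assumes Q: "closed Q" and xb: "xb \<in> Q" and e: "e > 0"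
    and U: "\<forall>w\<in>ball xb e. \<exists>!x. x \<in> proj_set Q w"
    and zq: "zq \<in> Q" "norm (zq - xb) < e/8" and px: "zq \<in> proj_set Q x" and z: "z \<in> Q"
  shows "(x - zq) \<bullet> (z - zq) \<le> norm (x - zq) * (norm (z - zq))^2 / (2*(e/8))"
proof (cases "x = zq")
  case True then show ?thesis by simp
next
  case False
  define t0 where "t0 = norm (x - zq)"
  define r where "r = e/8"
  have r: "r > 0" using e by (simp add: r_def)
  have t0: "t0 > 0" using False by (simp add: t0_def)
  define u where "u = (1/t0) *\<^sub>R (x - zq)"
  have u: "norm u = 1" using t0 by (simp add: u_def t0_def)
  have xu: "x - zq = t0 *\<^sub>R u" using t0 by (simp add: u_def)
  have "zq \<in> proj_set Q (zq + t0 *\<^sub>R u)" using px xu by (metis add.commute diff_add_cancel)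
  from proj_ext[OF Q xb e U zq u t0 this]
  have "zq \<in> proj_set Q (zq + r *\<^sub>R u)" by (simp add: r_def)
  then have "norm (zq - (zq + r *\<^sub>R u)) \<le> norm (z - (zq + r *\<^sub>R u))"
    using z unfolding proj_set_def by auto
  then have h: "r \<le> norm ((z - zq) - r *\<^sub>R u)" using u r by (simp add: algebra_simps)
  have "r^2 \<le> (norm ((z - zq) - r *\<^sub>R u))^2" using h r by (simp add: power_mono)
  also have "\<dots> = ((z - zq) - r *\<^sub>R u) \<bullet> ((z - zq) - r *\<^sub>R u)" by (rule power2_norm_eq_inner)
  also have "\<dots> = (z - zq) \<bullet> (z - zq) - 2 * r * ((z - zq) \<bullet> u) + r^2 * (u \<bullet> u)"
    by (simp add: inner_diff_left inner_diff_right inner_commute power2_eq_square algebra_simps)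
  also have "\<dots> = (norm (z - zq))^2 - 2 * r * ((z - zq) \<bullet> u) + r^2"
    using u by (simp add: power2_norm_eq_inner[symmetric])
  finally have k: "2 * r * ((z - zq) \<bullet> u) \<le> (norm (z - zq))^2" by simp
  have "(x - zq) \<bullet> (z - zq) = t0 * ((z - zq) \<bullet> u)" by (simp add: xu inner_commute)
  also have "\<dots> \<le> t0 * ((norm (z - zq))^2 / (2*r))"
    using k r t0 by (intro mult_left_mono) (auto simp: field_simps)
  finally show ?thesis by (simp add: t0_def r_def)
qed


lemma vangle_inner:
  fixes u v :: "'a::euclidean_space"
  assumes "u \<noteq> 0" "v \<noteq> 0" "vangle u v \<ge> \<alpha>" "\<alpha> > 0"
  shows "u \<bullet> v \<le> cos (min \<alpha> pi) * norm u * norm v"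
proof -
  define y where "y = (u \<bullet> v) / (norm u * norm v)"
  have np: "norm u * norm v > 0" using assms by simp
  have "\<bar>u \<bullet> v\<bar> \<le> norm u * norm v" by (rule Cauchy_Schwarz_ineq2)
  then have y1: "-1 \<le> y" "y \<le> 1" using np by (auto simp: y_def field_simps abs_le_iff)
  have ay: "arccos y \<ge> min \<alpha> pi" using assms(3) unfolding vangle_def y_def by simp
  have "cos (arccos y) \<le> cos (min \<alpha> pi)"
    by (rule cos_monotone_0_pi_le) (use assms(4) ay arccos_ubound[OF y1] in auto)
  then have "y \<le> cos (min \<alpha> pi)" using cos_arccos[OF y1] by simp
  then show ?thesis using np by (simp add: y_def field_simps)
qed

lemma tri_est:
  fixes p q :: "'a::real_inner"
  assumes "norm q \<le> r/2" "r > 0" "p \<bullet> q \<le> C * norm p * norm q" "0 \<le> C" "C < 1"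
    and h: "(norm q)^2 - p \<bullet> q \<le> norm q * (norm (p - q))^2 / (2*r)"
  shows "(norm q)^2 \<le> (1+C)/(3-C) * (norm p)^2"
proof -
  have e: "(norm (p - q))^2 = (norm p)^2 + (norm q)^2 - 2 * (p \<bullet> q)"
    by (simp add: power2_norm_eq_inner inner_diff_left inner_diff_right inner_commute)
  have hh: "norm q * (norm (p - q))^2 / (2*r) \<le> (norm (p - q))^2 / 4"
  proof -
    have "norm q / (2*r) \<le> 1/4" using assms(1,2) by (simp add: field_simps)
    then have "(norm q / (2*r)) * (norm (p - q))^2 \<le> (1/4) * (norm (p - q))^2"
      by (intro mult_right_mono) auto
    then show ?thesis by simp
  qed
  have "(norm q)^2 - p \<bullet> q \<le> (norm (p - q))^2 / 4" using h hh by linarith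
  then have "3 * (norm q)^2 \<le> (norm p)^2 + 2 * (p \<bullet> q)" unfolding e by (simp add: field_simps)
  also have "\<dots> \<le> (norm p)^2 + 2 * C * norm p * norm q" using assms(3) by simp
  also have "\<dots> \<le> (norm p)^2 + C * ((norm p)^2 + (norm q)^2)"
  proof -
    have "2 * norm p * norm q \<le> (norm p)^2 + (norm q)^2"
      using sum_squares_bound[of "norm p" "norm q"] by (simp add: power2_eq_square)
    then have "C * (2 * norm p * norm q) \<le> C * ((norm p)^2 + (norm q)^2)"
      using assms(4) by (rule mult_left_mono)
    then show ?thesis by (simp add: algebra_simps)
  qed
  finally have "(3 - C) * (norm q)^2 \<le> (1 + C) * (norm p)^2" by (simp add: algebra_simps)
  then show ?thesis using assms(5) by (simp add: field_simps)
qed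


lemma key_step:
  fixes M Q :: "'a::euclidean_space set" and xbar :: 'a and \<Phi> :: "'a \<Rightarrow> 'a"
  assumes M: "closed M" and Q: "closed Q" "M \<noteq> {}" "Q \<noteq> {}" and xb: "xbar \<in> M \<inter> Q"
    and sep: "intersects_separably Q M xbar"
    and prox: "prox_regular_at Q xbar"
    and inex: "inexact_projection \<Phi> M xbar"
  shows "\<exists>\<delta>1>0. \<exists>c. 0 \<le> c \<and> c < 1 \<and> (\<forall>z\<in>Q. norm (z - xbar) < \<delta>1 \<longrightarrow>
           (\<forall>z1 \<in> proj_set Q (\<Phi> z). infdist z1 M \<le> c * infdist z M \<and> norm (z1 - z) \<le> 3 * infdist z M))"
proof -
  obtain e0 where e0: "e0 > 0" and U: "\<forall>w\<in>ball xbar e0. \<exists>!x. x \<in> proj_set Q w"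
    using prox unfolding prox_regular_at_def by blast
  obtain \<alpha> \<delta>s where \<alpha>: "\<alpha> > 0" and \<delta>s: "\<delta>s > 0" and SEP: "\<And>z x z'. z \<in> Q - M \<Longrightarrow> norm (z - xbar) < \<delta>s \<Longrightarrow>
        x \<in> proj_set M z - Q \<Longrightarrow> z' \<in> proj_set Q x \<Longrightarrow> vangle (z - x) (z' - x) \<ge> \<alpha>"
    using sep unfolding intersects_separably_def by blast
  define C0 where "C0 = cos (min \<alpha> pi)"
  have C0: "C0 < 1"
  proof -
    have "cos (min \<alpha> pi) < cos 0"
      by (rule cos_monotone_0_pi) (use \<alpha> in \<open>auto simp: min_def\<close>)
    then show ?thesis by (simp add: C0_def)
  qed
  define C where "C = max C0 0"
  have C: "0 \<le> C" "C < 1" "C0 \<le> C" using C0 by (auto simp: C_def)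
  define \<kappa> where "\<kappa> = (1 + C) / (3 - C)"
  have \<kappa>: "0 \<le> \<kappa>" "\<kappa> < 1" using C by (auto simp: \<kappa>_def field_simps)
  define c0 where "c0 = sqrt \<kappa>"
  have c0: "0 \<le> c0" "c0 < 1" using \<kappa> by (auto simp: c0_def real_sqrt_lt_1_iff)
  define \<eta> where "\<eta> = (1 - c0) / 4"
  have \<eta>: "\<eta> > 0" "\<eta> \<le> 1/4" using c0 by (auto simp: \<eta>_def)
  define c where "c = c0 + 2 * \<eta>"
  have c: "0 \<le> c" "c < 1" "2 * \<eta> \<le> c" using c0 \<eta> by (auto simp: c_def \<eta>_def field_simps)
  have ev: "eventually (\<lambda>z. norm (infdist (\<Phi> z) (proj_set M z)) \<le> \<eta> * norm (infdist z M)) (nhds xbar)"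
    using landau_o.smallD[OF _ \<eta>(1)] inex unfolding inexact_projection_def by blast
  then obtain \<rho> where \<rho>: "\<rho> > 0" and RHO: "\<And>z. dist z xbar < \<rho> \<Longrightarrow>
        norm (infdist (\<Phi> z) (proj_set M z)) \<le> \<eta> * norm (infdist z M)"
    unfolding eventually_nhds_metric by blast
  define \<delta>1 where "\<delta>1 = min \<rho> (min \<delta>s (e0/24))"
  have \<delta>1: "\<delta>1 > 0" "\<delta>1 \<le> \<rho>" "\<delta>1 \<le> \<delta>s" "\<delta>1 \<le> e0/24" using \<rho> \<delta>s e0 by (auto simp: \<delta>1_def)
  have "\<forall>z\<in>Q. norm (z - xbar) < \<delta>1 \<longrightarrow>
           (\<forall>z1 \<in> proj_set Q (\<Phi> z). infdist z1 M \<le> c * infdist z M \<and> norm (z1 - z) \<le> 3 * infdist z M)"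
  proof (intro ballI impI)
    fix z z1 assume zQ: "z \<in> Q" and zn: "norm (z - xbar) < \<delta>1" and z1: "z1 \<in> proj_set Q (\<Phi> z)"
    define d where "d = infdist z M"
    have d0: "d \<ge> 0" by (simp add: d_def infdist_nonneg)
    have dle: "d \<le> norm (z - xbar)" using infdist_le[of xbar M z] xb by (simp add: d_def dist_norm)
    have Pc: "closed (proj_set M z)" by (rule proj_set_closed[OF M])
    have Pne: "proj_set M z \<noteq> {}" using proj_set_nonempty[OF M Q(2)] by blast
    obtain x where xP: "x \<in> proj_set (proj_set M z) (\<Phi> z)" using proj_set_nonempty[OF Pc Pne] by blast
    have xPM: "x \<in> proj_set M z" using xP by (simp add: proj_set_def)
    have xM: "x \<in> M" using xPM by (simp add: proj_set_def)
    have "norm (x - \<Phi> z) = infdist (\<Phi> z) (proj_set M z)" by (rule proj_set_dist[OF xP])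
    also have "\<dots> \<le> \<eta> * d" using RHO[of z] zn \<delta>1 infdist_nonneg[of "\<Phi> z"] d0
      by (simp add: dist_norm d_def)
    finally have xPhi: "norm (\<Phi> z - x) \<le> \<eta> * d" by (simp add: norm_minus_commute)
    have xz: "norm (x - z) = d" using proj_set_dist[OF xPM] by (simp add: d_def)
    have z1d: "norm (z1 - \<Phi> z) = infdist (\<Phi> z) Q" by (rule proj_set_dist[OF z1])
    have dQPhi: "infdist (\<Phi> z) Q \<le> infdist x Q + norm (\<Phi> z - x)"
      using infdist_triangle[of "\<Phi> z" Q x] by (simp add: dist_norm)
    have t1: "norm (z1 - x) \<le> norm (z1 - \<Phi> z) + norm (\<Phi> z - x)"
      using norm_triangle_ineq[of "z1 - \<Phi> z" "\<Phi> z - x"] by simp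
    have t2: "norm (z1 - z) \<le> norm (z1 - x) + norm (x - z)"
      using norm_triangle_ineq[of "z1 - x" "x - z"] by simp
    have dM1: "infdist z1 M \<le> norm (z1 - x)" using infdist_le[OF xM, of z1] by (simp add: dist_norm)
    have main: "infdist x Q \<le> c0 * d"
    proof (cases "x \<in> Q")
      case True then show ?thesis using c0 d0 by simp
    next
      case False
      obtain z' where z': "z' \<in> proj_set Q x" using proj_set_nonempty[OF Q(1) Q(3)] by blast
      have z'Q: "z' \<in> Q" using z' by (simp add: proj_set_def)
      have zx: "z \<noteq> x" using False zQ by auto
      have dpos: "d > 0" using xz zx by auto
      have zM: "z \<notin> M" using dpos unfolding d_def using infdist_zero[of z M] by auto
      have z'x: "z' \<noteq> x" using False z'Q by auto
      have nq: "norm (z' - x) = infdist x Q" using proj_set_dist[OF z'] .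
      have nqd: "norm (z' - x) \<le> d"
        using nq infdist_le[OF zQ, of x] xz by (simp add: dist_norm norm_minus_commute)
      have ang: "vangle (z - x) (z' - x) \<ge> \<alpha>"
        using SEP[of z x z'] zQ zM zn \<delta>1 xPM False z' by auto
      have ip: "(z - x) \<bullet> (z' - x) \<le> C * norm (z - x) * norm (z' - x)"
      proof -
        have "(z - x) \<bullet> (z' - x) \<le> C0 * norm (z - x) * norm (z' - x)"
          using vangle_inner[OF _ _ ang \<alpha>] zx z'x unfolding C0_def by auto
        also have "\<dots> \<le> C * norm (z - x) * norm (z' - x)"
          using C(3) by (intro mult_right_mono) auto
        finally show ?thesis .
      qed
      have z'n: "norm (z' - xbar) < e0/8"
      proof -
        have "norm (z' - xbar) \<le> norm (z' - x) + norm (x - z) + norm (z - xbar)"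
          using norm_triangle_ineq[of "z' - x" "x - z"] norm_triangle_ineq[of "z' - z" "z - xbar"]
          by simp
        then show ?thesis using nqd xz dle zn \<delta>1 by simp
      qed
      have hyp: "(x - z') \<bullet> (z - z') \<le> norm (x - z') * (norm (z - z'))^2 / (2*(e0/8))"
        by (rule proj_hypo[OF Q(1) _ e0 U z'Q z'n z' zQ]) (use xb in auto)
      have hyp': "(norm (z' - x))^2 - (z - x) \<bullet> (z' - x)
            \<le> norm (z' - x) * (norm ((z - x) - (z' - x)))^2 / (2*(e0/8))"
      proof -
        have "(x - z') \<bullet> (z - z') = (z' - x) \<bullet> (z' - x) - (z - x) \<bullet> (z' - x)"
          by (simp add: inner_diff_left inner_diff_right inner_commute algebra_simps)
        moreover have "(z' - x) \<bullet> (z' - x) = (norm (z' - x))^2" by (simp add: power2_norm_eq_inner)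
        moreover have "(z - x) - (z' - x) = z - z'" by simp
        ultimately show ?thesis using hyp by (simp add: norm_minus_commute)
      qed
      have "(norm (z' - x))^2 \<le> (1+C)/(3-C) * (norm (z - x))^2"
        by (rule tri_est[OF _ _ ip C(1) C(2) hyp']) (use nqd dle zn \<delta>1 e0 in auto)
      then have "(norm (z' - x))^2 \<le> \<kappa> * d^2" using xz by (simp add: \<kappa>_def norm_minus_commute)
      then have "sqrt ((norm (z' - x))^2) \<le> sqrt (\<kappa> * d^2)" by (rule real_sqrt_le_mono)
      then have "norm (z' - x) \<le> c0 * d" using d0 by (simp add: c0_def real_sqrt_mult)
      then show ?thesis using nq by simp
    qed
    have "infdist z1 M \<le> c * d"
      using dM1 t1 z1d dQPhi main xPhi by (simp add: c_def algebra_simps)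
    moreover have "norm (z1 - z) \<le> 3 * d"
    proof -
      have "c0 * d \<le> 1 * d" using c0 d0 by (intro mult_right_mono) auto
      then have A: "c0 * d \<le> d" by simp
      have "\<eta> * d \<le> (1/4) * d" using \<eta> d0 by (intro mult_right_mono) auto
      then have B: "\<eta> * d \<le> d / 4" by simp
      show ?thesis using t2 t1 z1d dQPhi main xPhi xz A B d0 by linarith
    qed
    ultimately show "infdist z1 M \<le> c * infdist z M \<and> norm (z1 - z) \<le> 3 * infdist z M"
      by (simp add: d_def)
  qed
  then show ?thesis using \<delta>1(1) c(1,2) by blast
qed


theorem mainTheorem1:
  fixes M Q :: "'a::euclidean_space set" and xbar :: 'a and \<Phi> :: "'a \<Rightarrow> 'a"
  assumes "closed M" "closed Q" "M \<noteq> {}" "Q \<noteq> {}" "xbar \<in> M \<inter> Q"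
    and "intersects_separably Q M xbar"
    and "prox_regular_at Q xbar"
    and "inexact_projection \<Phi> M xbar"
  shows "\<exists>\<epsilon>>0. \<forall>z :: nat \<Rightarrow> 'a.
           z 0 \<in> Q \<and> norm (z 0 - xbar) < \<epsilon> \<and> (\<forall>k. z (Suc k) \<in> proj_set Q (\<Phi> (z k)))
           \<longrightarrow> (\<exists>zhat \<in> M \<inter> Q. converges_linearly z zhat)"
proof -
  obtain \<delta>1 c where \<delta>1: "\<delta>1 > 0" and c: "0 \<le> c" "c < 1" and STEP: "\<And>z z1. z \<in> Q \<Longrightarrow> norm (z - xbar) < \<delta>1 \<Longrightarrow>
      z1 \<in> proj_set Q (\<Phi> z) \<Longrightarrow> infdist z1 M \<le> c * infdist z M \<and> norm (z1 - z) \<le> 3 * infdist z M"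
    using key_step[OF assms] by blast
  define A where "A = 1 + 3 / (1 - c)"
  have A: "A \<ge> 1" using c by (simp add: A_def)
  define \<epsilon> where "\<epsilon> = \<delta>1 / A"
  have \<epsilon>: "\<epsilon> > 0" using \<delta>1 A by (simp add: \<epsilon>_def)
  have "\<forall>z :: nat \<Rightarrow> 'a.
           z 0 \<in> Q \<and> norm (z 0 - xbar) < \<epsilon> \<and> (\<forall>k. z (Suc k) \<in> proj_set Q (\<Phi> (z k)))
           \<longrightarrow> (\<exists>zhat \<in> M \<inter> Q. converges_linearly z zhat)"
  proof (intro allI impI, elim conjE)
    fix z :: "nat \<Rightarrow> 'a"
    assume z0: "z 0 \<in> Q" and z0n: "norm (z 0 - xbar) < \<epsilon>" and it: "\<forall>k. z (Suc k) \<in> proj_set Q (\<Phi> (z k))"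
    define d0 where "d0 = infdist (z 0) M"
    have d0: "0 \<le> d0" by (simp add: d0_def infdist_nonneg)
    have d0le: "d0 \<le> norm (z 0 - xbar)" using infdist_le[of xbar M "z 0"] assms(5)
      by (simp add: d0_def dist_norm)
    define B where "B = 3 * d0 / (1 - c)"
    have B: "B \<ge> 0" using d0 c by (simp add: B_def)
    have B3: "B * (1 - c) = 3 * d0" using c by (simp add: B_def)
    have Bz: "norm (z 0 - xbar) + B < \<delta>1"
    proof -
      have "B \<le> 3 * norm (z 0 - xbar) / (1 - c)" using d0le c by (simp add: B_def divide_right_mono)
      then have "norm (z 0 - xbar) + B \<le> A * norm (z 0 - xbar)" by (simp add: A_def algebra_simps)
      also have "\<dots> < A * \<epsilon>" using z0n A by simp
      also have "\<dots> = \<delta>1" using A by (simp add: \<epsilon>_def)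
      finally show ?thesis .
    qed
    have inv: "z k \<in> Q \<and> norm (z k - z 0) \<le> B * (1 - c^k) \<and> infdist (z k) M \<le> c^k * d0" for k
    proof (induction k)
      case 0 then show ?case using z0 by (simp add: d0_def)
    next
      case (Suc k)
      have zkQ: "z k \<in> Q" using Suc by simp
      have ck: "0 \<le> c^k" "c^k \<le> 1" using c by (auto simp: power_le_one)
      have "B * (1 - c^k) \<le> B" using B ck by (simp add: mult_left_le)
      then have "norm (z k - z 0) \<le> B" using Suc by simp
      then have zkn: "norm (z k - xbar) < \<delta>1"
        using norm_triangle_ineq[of "z k - z 0" "z 0 - xbar"] Bz by simp
      from STEP[OF zkQ zkn it[rule_format, of k]]
      have s1: "infdist (z (Suc k)) M \<le> c * infdist (z k) M" and s2: "norm (z (Suc k) - z k) \<le> 3 * infdist (z k) M"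
        by auto
      have "infdist (z (Suc k)) M \<le> c * (c^k * d0)" using s1 Suc c(1) mult_left_mono by fastforce
      then have i1: "infdist (z (Suc k)) M \<le> c^Suc k * d0" by (simp add: mult.assoc)
      have s2': "norm (z (Suc k) - z k) \<le> 3 * (c^k * d0)" using s2 Suc by simp
      have "norm (z (Suc k) - z 0) \<le> norm (z (Suc k) - z k) + norm (z k - z 0)"
        using norm_triangle_ineq[of "z (Suc k) - z k" "z k - z 0"] by simp
      also have "\<dots> \<le> 3 * (c^k * d0) + B * (1 - c^k)" using s2' Suc by simp
      also have "\<dots> = B * (1 - c^Suc k)"
      proof -
        have "3 * (c^k * d0) = (B * (1 - c)) * c^k" using B3 by simp
        then show ?thesis by (simp add: algebra_simps)
      qed
      finally have i2: "norm (z (Suc k) - z 0) \<le> B * (1 - c^Suc k)" .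
      have "z (Suc k) \<in> Q" using it by (simp add: proj_set_def)
      then show ?case using i1 i2 by simp
    qed
    have zQ: "z k \<in> Q" for k using inv by simp
    have znb: "norm (z k - xbar) < \<delta>1" for k
    proof -
      have ck: "0 \<le> c^k" "c^k \<le> 1" using c by (auto simp: power_le_one)
      have "B * (1 - c^k) \<le> B" using B ck by (simp add: mult_left_le)
      then have "norm (z k - z 0) \<le> B" using inv[of k] by simp
      then show ?thesis using norm_triangle_ineq[of "z k - z 0" "z 0 - xbar"] Bz by simp
    qed
    have stepb: "norm (z (Suc k) - z k) \<le> 3 * d0 * c^k" for k
    proof -
      have "norm (z (Suc k) - z k) \<le> 3 * infdist (z k) M"
        using STEP[OF zQ znb it[rule_format, of k]] by auto
      then show ?thesis using inv[of k] by (simp add: algebra_simps)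
    qed
    define D where "D = (\<lambda>i. z (Suc i) - z i)"
    have sumD: "summable D"
    proof (rule summable_comparison_test)
      show "\<exists>N. \<forall>n\<ge>N. norm (D n) \<le> 3 * d0 * c^n" using stepb by (auto simp: D_def)
      show "summable (\<lambda>n. 3 * d0 * c^n)" using c by (intro summable_mult summable_geometric) auto
    qed
    have "(\<lambda>n. z 0 + (\<Sum>i<n. D i)) \<longlonglongrightarrow> z 0 + suminf D"
      by (intro tendsto_intros summable_LIMSEQ sumD)
    moreover have "z 0 + (\<Sum>i<n. D i) = z n" for n unfolding D_def sum_lessThan_telescope by simp
    ultimately have lim: "z \<longlonglongrightarrow> z 0 + suminf D" by simp
    define zhat where "zhat = z 0 + suminf D"
    have lim': "z \<longlonglongrightarrow> zhat" using lim by (simp add: zhat_def)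
    have tail: "norm (z (k + m) - z k) \<le> B * c^k * (1 - c^m)" for k m
    proof (induction m)
      case 0 then show ?case by simp
    next
      case (Suc m)
      have "norm (z (k + Suc m) - z k) \<le> norm (z (Suc (k + m)) - z (k + m)) + norm (z (k + m) - z k)"
        using norm_triangle_ineq[of "z (Suc (k + m)) - z (k + m)" "z (k + m) - z k"] by simp
      also have "\<dots> \<le> 3 * d0 * c^(k+m) + B * c^k * (1 - c^m)" using stepb[of "k+m"] Suc by simp
      also have "\<dots> = B * c^k * (1 - c^Suc m)"
      proof -
        have "3 * d0 * c^(k+m) = B * (1 - c) * c^k * c^m" using B3 by (simp add: power_add)
        then show ?thesis by (simp add: algebra_simps)
      qed
      finally show ?case .
    qed
    have tailb: "norm (zhat - z k) \<le> B * c^k" for k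
    proof (rule LIMSEQ_le_const2)
      show "(\<lambda>m. norm (z (k + m) - z k)) \<longlonglongrightarrow> norm (zhat - z k)"
        using LIMSEQ_ignore_initial_segment[OF lim', of k] by (intro tendsto_intros) (simp add: add.commute)
      have "B * c^k * (1 - c^m) \<le> B * c^k" for m
        using B c by (simp add: mult_left_le power_le_one zero_le_power)
      then show "\<exists>N. \<forall>n\<ge>N. norm (z (k + n) - z k) \<le> B * c^k" using tail order_trans by blast
    qed
    have zhatQ: "zhat \<in> Q" using closed_sequentially[OF assms(2) _ lim'] zQ by blast
    have "infdist zhat M \<le> 0"
    proof (rule LIMSEQ_le)
      show "(\<lambda>k. infdist (z k) M) \<longlonglongrightarrow> infdist zhat M" by (intro tendsto_infdist lim')
      show "(\<lambda>k. c^k * d0) \<longlonglongrightarrow> 0" using c LIMSEQ_power_zero[of c] tendsto_mult_left_zero by fastforce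
      show "\<exists>N. \<forall>n\<ge>N. infdist (z n) M \<le> c^n * d0" using inv by blast
    qed
    then have "infdist zhat M = 0" using infdist_nonneg[of zhat M] by simp
    then have zhatM: "zhat \<in> M" using in_closed_iff_infdist_zero[OF assms(1,3)] by simp
    define c' where "c' = max c (1/2)"
    have c': "0 < c'" "c' < 1" "c \<le> c'" using c by (auto simp: c'_def)
    have "converges_linearly z zhat"
      unfolding converges_linearly_def
    proof (intro exI conjI allI)
      show "0 < c'" "c' < 1" using c' by auto
      show "B + 1 > 0" using B by simp
      fix k
      have "norm (z k - zhat) \<le> B * c^k" using tailb[of k] by (simp add: norm_minus_commute)
      also have "\<dots> \<le> B * c'^k" using B c c' by (intro mult_left_mono power_mono) auto
      also have "\<dots> < (B + 1) * c'^k" using c' by (simp add: algebra_simps)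
      finally show "norm (z k - zhat) < (B + 1) * c'^k" .
    qed
    then show "\<exists>zhat \<in> M \<inter> Q. converges_linearly z zhat" using zhatQ zhatM by blast
  qed
  then show ?thesis using \<epsilon> by blast
qed

end
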